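(* Fix $\delta\le 1/T$ and, for each context $\mathbf{z}$, a set $\mathcal{E}_{\mathbf{z}}=\mathcal{E}_{\mathbf{z}}(\delta)$ of $\delta$-approximate extreme points. For any sequence of contexts $\mathbf{z}_1,\ldots,\mathbf{z}_T$, any sequence of followers $f_1,\ldots,f_T$ and any leader policy $\pi$, there exists a policy $\pi^{(\mathcal{E})}:\mathcal{Z}\to\bigcup_{\mathbf{z}\in\mathcal{Z}}\mathcal{E}_{\mathbf{z}}$ with $\pi^{(\mathcal{E})}(\mathbf{z})\in\mathcal{E}_{\mathbf{z}}$ for every $\mathbf{z}$, such that $$\sum_{t=1}^T u(\mathbf{z}_t,\pi(\mathbf{z}_t),b_{f_t}(\mathbf{z}_t,\pi(\mathbf{z}_t)))-u(\mathbf{z}_t,\pi^{(\mathcal{E})}(\mathbf{z}_t),b_{f_t}(\mathbf{z}_t,\pi^{(\mathcal{E})}(\mathbf{z}_t)))\le 1.$$ Moreover, the same holds in expectation over any distribution $\mathcal{F}$ over follower types: for any contexts $\mathbf{z}_1,\dots,\mathbf{z}_T$ and any policy $\pi$ there is such a $\pi^{(\mathcal{E})}$ with $\sum_{t=1}^T\mathbb{E}_{f_t\sim\mathcal{F}}[u(\mathbf{z}_t,\pi(\mathbf{z}_t),b_{f_t}(\mathbf{z}_t,\pi(\mathbf{z}_t)))-u(\mathbf{z}_t,\pi^{(\mathcal{E})}(\mathbf{z}_t),b_{f_t}(\mathbf{z}_t,\pi^{(\mathcal{E})}(\mathbf{z}_t)))]\le 1$.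
   Context: Finite leader action set $\mathcal{A}$, finite follower action set $\mathcal{A}_f$, context space $\mathcal{Z}\subseteq\mathbb{R}^d$, follower types $\alpha^{(1)},\ldots,\alpha^{(K)}$ with utilities $u_{\alpha^{(i)}}:\mathcal{Z}\times\mathcal{A}\times\mathcal{A}_f\to[0,1]$, leader utility $u:\mathcal{Z}\times\mathcal{A}\times\mathcal{A}_f\to[0,1]$, mixed strategies $\mathbf{x}\in\mathcal{X}=\Delta(\mathcal{A})$, $u(\mathbf{z},\mathbf{x},a_f)=\sum_{a_l}\mathbf{x}[a_l]u(\mathbf{z},a_l,a_f)$. Best response: $b_f(\mathbf{z},\mathbf{x})\in\arg\max_{a_f}\sum_{a_l}\mathbf{x}[a_l]u_f(\mathbf{z},a_l,a_f)$, ties broken by a fixed known ordering over $\mathcal{A}_f$. A policy is a map $\mathcal{Z}\to\mathcal{X}$. For a type $\alpha^{(i)}$, action $a_f$ and context $\mathbf{z}$, $\mathcal{X}_{\mathbf{z}}(\alpha^{(i)},a_f)=\{\mathbf{x}\in\mathcal{X}:b_{\alpha^{(i)}}(\mathbf{z},\mathbf{x})=a_f\}$; for a function $\sigma:\{\alpha^{(1)},\ldots,\alpha^{(K)}\}\to\mathcal{A}_f$, the contextual best-response region is $\mathcal{X}_{\mathbf{z}}(\sigma)=\bigcap_{i\in[K]}\mathcal{X}_{\mathbf{z}}(\alpha^{(i)},\sigma(\alpha^{(i)}))$. $\delta$-approximate extreme points: for $\delta>0$ and context $\mathbf{z}$, $\mathcal{E}_{\mathbf{z}}(\delta)$ is a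 set of mixed strategies such that for every $\sigma$ with $\mathcal{X}_{\mathbf{z}}(\sigma)\neq\emptyset$ and every extreme point $\mathbf{x}$ of the closure $\mathrm{cl}(\mathcal{X}_{\mathbf{z}}(\sigma))$: if $\mathbf{x}\in\mathcal{X}_{\mathbf{z}}(\sigma)$ then $\mathbf{x}\in\mathcal{E}_{\mathbf{z}}(\delta)$; otherwise there is $\mathbf{x}'\in\mathcal{E}_{\mathbf{z}}(\delta)\cap\mathcal{X}_{\mathbf{z}}(\sigma)$ with $\|\mathbf{x}'-\mathbf{x}\|_1\le\delta$. *)

theory Defs
  imports "HOL-Analysis.Analysis" "HOL-Probability.Probability_Mass_Function"
begin

definition mixed :: "(real ^ 'a::finite) set" where
  "mixed = {x. (\<forall>a. 0 \<le> x $ a) \<and> (\<Sum>a\<in>UNIV. x $ a) = 1}"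

definition eu :: "('z \<Rightarrow> 'a::finite \<Rightarrow> 'f \<Rightarrow> real) \<Rightarrow> 'z \<Rightarrow> real ^ 'a \<Rightarrow> 'f \<Rightarrow> real" where
  "eu v z x af = (\<Sum>a\<in>UNIV. x $ a * v z a af)"

text \<open>Best response of a follower with utility v; ties are broken by the fixed
  known ordering of follower actions (the linear order of type 'f: the least
  maximiser is chosen).\<close>
definition br :: "('z \<Rightarrow> 'a::finite \<Rightarrow> 'f::{finite,linorder} \<Rightarrow> real) \<Rightarrow> 'z \<Rightarrow> real ^ 'a \<Rightarrow> 'f" where
  "br v z x = (LEAST af. \<forall>af'. eu v z x af' \<le> eu v z x af)"

definition br_region :: "('k \<Rightarrow> 'z \<Rightarrow> 'a::finite \<Rightarrow> 'f::{finite,linorder} \<Rightarrow> real) \<Rightarrow> 'z \<Rightarrow> 'k \<Rightarrow> 'f \<Rightarrow> (real ^ 'a) set" where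
  "br_region uf z k af = {x \<in> mixed. br (uf k) z x = af}"

definition cbr_region :: "('k \<Rightarrow> 'z \<Rightarrow> 'a::finite \<Rightarrow> 'f::{finite,linorder} \<Rightarrow> real) \<Rightarrow> 'z \<Rightarrow> ('k \<Rightarrow> 'f) \<Rightarrow> (real ^ 'a) set" where
  "cbr_region uf z \<sigma> = (\<Inter>k. br_region uf z k (\<sigma> k))"

definition l1dist :: "real ^ 'a::finite \<Rightarrow> real ^ 'a \<Rightarrow> real" where
  "l1dist x y = (\<Sum>a\<in>UNIV. \<bar>x $ a - y $ a\<bar>)"

definition approx_extreme_points :: "('k \<Rightarrow> 'z \<Rightarrow> 'a::finite \<Rightarrow> 'f::{finite,linorder} \<Rightarrow> real) \<Rightarrow> 'z \<Rightarrow> real \<Rightarrow> (real ^ 'a) set \<Rightarrow> bool" where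
  "approx_extreme_points uf z \<delta> E \<longleftrightarrow>
     E \<subseteq> mixed \<and>
     (\<forall>\<sigma>. cbr_region uf z \<sigma> \<noteq> {} \<longrightarrow>
        (\<forall>x. x extreme_point_of (closure (cbr_region uf z \<sigma>)) \<longrightarrow>
           (x \<in> cbr_region uf z \<sigma> \<longrightarrow> x \<in> E) \<and>
           (x \<notin> cbr_region uf z \<sigma> \<longrightarrow>
              (\<exists>x'\<in>E \<inter> cbr_region uf z \<sigma>. l1dist x' x \<le> \<delta>))))"

end

theory Submission
  imports Defs
begin

lemma eu_comb:
  "eu v z ((1 - t) *\<^sub>R x + t *\<^sub>R y) af = (1 - t) * eu v z x af + t * eu v z y af"
proof -
  have "eu v z ((1 - t) *\<^sub>R x + t *\<^sub>R y) af = (\<Sum>a\<in>UNIV. (1 - t) * (x $ a * v z a af) + t * (y $ a * v z a af))"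
    unfolding eu_def by (rule sum.cong) (auto simp: algebra_simps)
  also have "\<dots> = (1 - t) * eu v z x af + t * eu v z y af"
    unfolding eu_def by (simp add: sum.distrib sum_distrib_left)
  finally show ?thesis .
qed

lemma br_exists:
  fixes v :: "'z \<Rightarrow> 'a::finite \<Rightarrow> 'f::{finite,linorder} \<Rightarrow> real"
  shows "\<exists>af. \<forall>af'. eu v z x af' \<le> eu v z x af"
proof -
  let ?m = "Max (range (eu v z x))"
  have "?m \<in> range (eu v z x)" by (rule Max_in) auto
  then obtain af where "eu v z x af = ?m" by (metis rangeE)
  moreover have "\<forall>af'. eu v z x af' \<le> ?m" by (auto intro: Max_ge)
  ultimately show ?thesis by metis
qed

lemma br_Min:
  fixes v :: "'z \<Rightarrow> 'a::finite \<Rightarrow> 'f::{finite,linorder} \<Rightarrow> real"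
  shows "br v z x = Min {af. \<forall>af'. eu v z x af' \<le> eu v z x af}"
  unfolding br_def by (rule Least_Min) (auto intro: br_exists)

lemma br_iff:
  fixes v :: "'z \<Rightarrow> 'a::finite \<Rightarrow> 'f::{finite,linorder} \<Rightarrow> real"
  shows "br v z x = b \<longleftrightarrow> (\<forall>af'. eu v z x af' \<le> eu v z x b) \<and> (\<forall>af'<b. eu v z x af' < eu v z x b)"
proof
  assume h: "br v z x = b"
  let ?S = "{af. \<forall>af'. eu v z x af' \<le> eu v z x af}"
  have ne: "?S \<noteq> {}" using br_exists[of v z x] by auto
  have "b \<in> ?S" using Min_in[OF _ ne] h br_Min[of v z x] by simp
  then have 1: "\<forall>af'. eu v z x af' \<le> eu v z x b" by simp
  moreover have "\<forall>af'<b. eu v z x af' < eu v z x b"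
  proof (intro allI impI)
    fix af' assume lt: "af' < b"
    have "af' \<notin> ?S"
    proof
      assume "af' \<in> ?S"
      then have "Min ?S \<le> af'" by (intro Min_le) auto
      then show False using lt h br_Min[of v z x] by simp
    qed
    then have "\<not> (\<forall>a. eu v z x a \<le> eu v z x af')" by simp
    then show "eu v z x af' < eu v z x b" using 1 by (meson less_le_trans not_le)
  qed
  ultimately show "(\<forall>af'. eu v z x af' \<le> eu v z x b) \<and> (\<forall>af'<b. eu v z x af' < eu v z x b)" by blast
next
  assume h: "(\<forall>af'. eu v z x af' \<le> eu v z x b) \<and> (\<forall>af'<b. eu v z x af' < eu v z x b)"
  show "br v z x = b" unfolding br_def
  proof (rule Least_equality)
    show "\<forall>af'. eu v z x af' \<le> eu v z x b" using h by blast
  next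
    fix y assume "\<forall>af'. eu v z x af' \<le> eu v z x y"
    then show "b \<le> y" using h by (meson leD le_less_linear)
  qed
qed

lemma mixed_convex: "convex (mixed :: (real ^ 'a::finite) set)"
  unfolding convex_def mixed_def
  by (auto simp: sum.distrib sum_distrib_left[symmetric] algebra_simps)

lemma br_region_convex: "convex (br_region uf z k af)"
proof -
  have "convex {x. br (uf k) z x = af}"
    unfolding convex_def
  proof (intro ballI allI impI)
    fix x y :: "real ^ 'a" and u w :: real
    assume hx: "x \<in> {x. br (uf k) z x = af}" and hy: "y \<in> {x. br (uf k) z x = af}"
      and u: "0 \<le> u" and w: "0 \<le> w" and uw: "u + w = 1"
    have u1: "u = 1 - w" using uw by simp
    from hx hy have X: "(\<forall>af'. eu (uf k) z x af' \<le> eu (uf k) z x af) \<and> (\<forall>af'<af. eu (uf k) z x af' < eu (uf k) z x af)"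
      and Y: "(\<forall>af'. eu (uf k) z y af' \<le> eu (uf k) z y af) \<and> (\<forall>af'<af. eu (uf k) z y af' < eu (uf k) z y af)"
      by (simp_all add: br_iff)
    have "br (uf k) z ((1 - w) *\<^sub>R x + w *\<^sub>R y) = af"
      unfolding br_iff eu_comb
    proof (intro conjI allI impI)
      fix af'
      show "(1 - w) * eu (uf k) z x af' + w * eu (uf k) z y af' \<le> (1 - w) * eu (uf k) z x af + w * eu (uf k) z y af"
        using X Y u w u1 by (intro add_mono mult_left_mono) auto
    next
      fix af' assume "af' < af"
      then have a: "eu (uf k) z x af' < eu (uf k) z x af" "eu (uf k) z y af' < eu (uf k) z y af" using X Y by auto
      show "(1 - w) * eu (uf k) z x af' + w * eu (uf k) z y af' < (1 - w) * eu (uf k) z x af + w * eu (uf k) z y af"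
      proof (cases "w = 0")
        case True then show ?thesis using a by simp
      next
        case False then have "w > 0" using w by simp
        then have "w * eu (uf k) z y af' < w * eu (uf k) z y af" using a by simp
        moreover have "(1 - w) * eu (uf k) z x af' \<le> (1 - w) * eu (uf k) z x af"
          using a u u1 by (intro mult_left_mono) auto
        ultimately show ?thesis by linarith
      qed
    qed
    then show "u *\<^sub>R x + w *\<^sub>R y \<in> {x. br (uf k) z x = af}" using u1 by simp
  qed
  moreover have "br_region uf z k af = mixed \<inter> {x. br (uf k) z x = af}"
    unfolding br_region_def by auto
  ultimately show ?thesis using mixed_convex convex_Int by metis
qed

lemma cbr_region_convex: "convex (cbr_region uf z \<sigma>)"
  unfolding cbr_region_def by (rule convex_INT) (simp add: br_region_convex)

lemma mixed_bounded: "bounded (mixed :: (real ^ 'a::finite) set)"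
proof -
  have "mixed \<subseteq> cball (0 :: real ^ 'a) 1"
  proof
    fix x :: "real ^ 'a" assume "x \<in> mixed"
    then have "norm x \<le> 1" using norm_le_l1_cart[of x] unfolding mixed_def by simp
    then show "x \<in> cball 0 1" by simp
  qed
  then show ?thesis using bounded_cball bounded_subset by blast
qed

lemma cbr_br: "x \<in> cbr_region uf z \<sigma> \<Longrightarrow> br (uf k) z x = \<sigma> k"
  unfolding cbr_region_def br_region_def by auto

lemma cbr_mixed: "cbr_region uf z \<sigma> \<subseteq> mixed"
  unfolding cbr_region_def br_region_def by auto

lemma core:
  fixes uf :: "'k \<Rightarrow> 'z \<Rightarrow> 'a::finite \<Rightarrow> 'f::{finite,linorder} \<Rightarrow> real" and w :: "'a \<Rightarrow> real"
  assumes AE: "approx_extreme_points uf z \<delta> Ez" and x0: "x0 \<in> mixed" and W: "\<forall>a. \<bar>w a\<bar> \<le> W" and d0: "\<delta> \<ge> 0"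
  shows "\<exists>x'\<in>Ez. (\<forall>k. br (uf k) z x' = br (uf k) z x0) \<and>
           (\<Sum>a\<in>UNIV. x0 $ a * w a) - (\<Sum>a\<in>UNIV. x' $ a * w a) \<le> W * \<delta>"
proof -
  define \<sigma> where "\<sigma> k = br (uf k) z x0" for k
  define R where "R = cbr_region uf z \<sigma>"
  have x0R: "x0 \<in> R" unfolding R_def cbr_region_def br_region_def \<sigma>_def using x0 by auto
  have brR: "\<And>x k. x \<in> R \<Longrightarrow> br (uf k) z x = br (uf k) z x0"
    unfolding R_def using cbr_br \<sigma>_def by metis
  define C where "C = closure R"
  have cC: "compact C" unfolding C_def R_def
    by (rule compact_closure[THEN iffD2], rule bounded_subset[OF mixed_bounded cbr_mixed])
  have vC: "convex C" unfolding C_def R_def by (intro convex_closure cbr_region_convex)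
  have x0C: "x0 \<in> C" unfolding C_def using x0R closure_subset by blast
  define wv :: "real ^ 'a" where "wv = (\<chi> a. w a)"
  have geq: "\<And>x. wv \<bullet> x = (\<Sum>a\<in>UNIV. x $ a * w a)"
    unfolding wv_def inner_vec_def by (simp add: mult.commute)
  have "continuous_on C (\<lambda>x. wv \<bullet> x)" by (intro continuous_intros)
  then obtain p where pC: "p \<in> C" and pmax: "\<forall>y\<in>C. wv \<bullet> y \<le> wv \<bullet> p"
    using continuous_attains_sup[OF cC] x0C by blast
  define F where "F = C \<inter> {x. wv \<bullet> x = wv \<bullet> p}"
  have fF: "F face_of C" unfolding F_def
    by (rule face_of_Int_supporting_hyperplane_le[OF vC]) (use pmax in auto)
  have "compact F" unfolding F_def by (intro compact_Int_closed cC closed_hyperplane)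
  moreover have "convex F" unfolding F_def by (intro convex_Int vC convex_hyperplane)
  moreover have "F \<noteq> {}" using pC unfolding F_def by auto
  ultimately obtain e where "e extreme_point_of F" using extreme_point_exists_convex by blast
  then have eC: "e extreme_point_of C" and eF: "e \<in> F" using extreme_point_of_face[OF fF] by auto
  have ge: "wv \<bullet> x0 \<le> wv \<bullet> e" using eF x0C pmax unfolding F_def by auto
  have Rne: "cbr_region uf z \<sigma> \<noteq> {}" using x0R R_def by auto
  have W0: "W \<ge> 0" using W by (meson abs_ge_zero order_trans)
  show ?thesis
  proof (cases "e \<in> R")
    case True
    then have "e \<in> Ez" using AE Rne eC unfolding approx_extreme_points_def R_def C_def by blast
    moreover have "(\<Sum>a\<in>UNIV. x0 $ a * w a) - (\<Sum>a\<in>UNIV. e $ a * w a) \<le> 0" using ge geq by simp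
    moreover have "W * \<delta> \<ge> 0" using W0 d0 by simp
    ultimately have "e \<in> Ez \<and> (\<forall>k. br (uf k) z e = br (uf k) z x0) \<and>
        (\<Sum>a\<in>UNIV. x0 $ a * w a) - (\<Sum>a\<in>UNIV. e $ a * w a) \<le> W * \<delta>"
      using brR[OF True] by (meson order_trans)
    then show ?thesis by blast
  next
    case False
    then obtain x' where x'E: "x' \<in> Ez" and x'R: "x' \<in> R" and d: "l1dist x' e \<le> \<delta>"
      using AE Rne eC unfolding approx_extreme_points_def R_def C_def by blast
    have "(\<Sum>a\<in>UNIV. e $ a * w a) - (\<Sum>a\<in>UNIV. x' $ a * w a) = (\<Sum>a\<in>UNIV. (e $ a - x' $ a) * w a)"
      by (simp add: sum_subtractf left_diff_distrib)
    also have "\<dots> \<le> (\<Sum>a\<in>UNIV. \<bar>x' $ a - e $ a\<bar> * W)"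
    proof (rule sum_mono)
      fix a
      have "(e $ a - x' $ a) * w a \<le> \<bar>(e $ a - x' $ a) * w a\<bar>" by simp
      also have "\<dots> = \<bar>x' $ a - e $ a\<bar> * \<bar>w a\<bar>" by (simp add: abs_mult abs_minus_commute)
      also have "\<dots> \<le> \<bar>x' $ a - e $ a\<bar> * W" using W by (intro mult_left_mono) auto
      finally show "(e $ a - x' $ a) * w a \<le> \<bar>x' $ a - e $ a\<bar> * W" .
    qed
    also have "\<dots> = W * l1dist x' e" unfolding l1dist_def by (simp add: sum_distrib_left mult.commute)
    also have "\<dots> \<le> W * \<delta>" using d W0 by (intro mult_left_mono)
    finally have "(\<Sum>a\<in>UNIV. e $ a * w a) - (\<Sum>a\<in>UNIV. x' $ a * w a) \<le> W * \<delta>" .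
    moreover have "(\<Sum>a\<in>UNIV. x0 $ a * w a) \<le> (\<Sum>a\<in>UNIV. e $ a * w a)" using ge geq by simp
    ultimately have "(\<Sum>a\<in>UNIV. x0 $ a * w a) - (\<Sum>a\<in>UNIV. x' $ a * w a) \<le> W * \<delta>" by linarith
    then show ?thesis using x'E brR[OF x'R] by blast
  qed
qed

lemma lin_ident:
  fixes u :: "'z \<Rightarrow> 'a::finite \<Rightarrow> 'f \<Rightarrow> real"
  shows "(\<Sum>t\<in>S. \<Sum>k\<in>UNIV. c t k * eu u z x (\<phi> k)) =
         (\<Sum>a\<in>UNIV. x $ a * (\<Sum>t\<in>S. \<Sum>k\<in>UNIV. c t k * u z a (\<phi> k)))"
proof -
  have "(\<Sum>t\<in>S. \<Sum>k\<in>UNIV. c t k * eu u z x (\<phi> k)) = (\<Sum>t\<in>S. \<Sum>k\<in>UNIV. \<Sum>a\<in>UNIV. x $ a * (c t k * u z a (\<phi> k)))"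
    unfolding eu_def by (simp add: sum_distrib_left mult.left_commute)
  also have "\<dots> = (\<Sum>t\<in>S. \<Sum>a\<in>UNIV. \<Sum>k\<in>UNIV. x $ a * (c t k * u z a (\<phi> k)))"
    by (rule sum.cong[OF refl], rule sum.swap)
  also have "\<dots> = (\<Sum>a\<in>UNIV. \<Sum>t\<in>S. \<Sum>k\<in>UNIV. x $ a * (c t k * u z a (\<phi> k)))"
    by (rule sum.swap)
  also have "\<dots> = (\<Sum>a\<in>UNIV. x $ a * (\<Sum>t\<in>S. \<Sum>k\<in>UNIV. c t k * u z a (\<phi> k)))"
    by (simp add: sum_distrib_left)
  finally show ?thesis .
qed

lemma aggregate:
  fixes Z :: "'z set"
    and u :: "'z \<Rightarrow> 'a::finite \<Rightarrow> 'f::{finite,linorder} \<Rightarrow> real"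
    and uf :: "'k::finite \<Rightarrow> 'z \<Rightarrow> 'a \<Rightarrow> 'f \<Rightarrow> real"
    and c :: "nat \<Rightarrow> 'k \<Rightarrow> real"
  assumes u_range: "\<forall>z\<in>Z. \<forall>a af. 0 \<le> u z a af \<and> u z a af \<le> 1"
    and d0: "\<delta> \<ge> 0" and dT: "real T * \<delta> \<le> 1"
    and E_approx: "\<forall>z\<in>Z. approx_extreme_points uf z \<delta> (E z)"
    and zsZ: "\<forall>t\<in>{1..T}. zs t \<in> Z" and pimix: "\<forall>z\<in>Z. \<pi> z \<in> mixed"
    and c0: "\<forall>t k. 0 \<le> c t k" and c1: "\<forall>t. (\<Sum>k\<in>UNIV. c t k) \<le> 1"
  shows "\<exists>\<pi>E. (\<forall>z\<in>Z. \<pi>E z \<in> E z) \<and>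
     (\<Sum>t=1..T. (\<Sum>k\<in>UNIV. c t k * eu u (zs t) (\<pi> (zs t)) (br (uf k) (zs t) (\<pi> (zs t))))
               - (\<Sum>k\<in>UNIV. c t k * eu u (zs t) (\<pi>E (zs t)) (br (uf k) (zs t) (\<pi>E (zs t))))) \<le> 1"
proof -
  define S where "S z = {t \<in> {1..T}. zs t = z}" for z
  define w where "w z a = (\<Sum>t\<in>S z. \<Sum>k\<in>UNIV. c t k * u z a (br (uf k) z (\<pi> z)))" for z a
  define P where "P z x' \<longleftrightarrow> x' \<in> E z \<and> (\<forall>k. br (uf k) z x' = br (uf k) z (\<pi> z)) \<and>
           (\<Sum>a\<in>UNIV. \<pi> z $ a * w z a) - (\<Sum>a\<in>UNIV. x' $ a * w z a) \<le> real (card (S z)) * \<delta>" for z x'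
  have exP: "\<exists>x'. P z x'" if zZ: "z \<in> Z" for z
  proof -
    have "\<forall>a. \<bar>w z a\<bar> \<le> real (card (S z))"
    proof
      fix a
      have "\<bar>w z a\<bar> \<le> (\<Sum>t\<in>S z. \<bar>\<Sum>k\<in>UNIV. c t k * u z a (br (uf k) z (\<pi> z))\<bar>)"
        unfolding w_def by (rule sum_abs)
      also have "\<dots> \<le> (\<Sum>t\<in>S z. 1)"
      proof (rule sum_mono)
        fix t
        have "\<bar>\<Sum>k\<in>UNIV. c t k * u z a (br (uf k) z (\<pi> z))\<bar> \<le> (\<Sum>k\<in>UNIV. \<bar>c t k * u z a (br (uf k) z (\<pi> z))\<bar>)"
          by (rule sum_abs)
        also have "\<dots> \<le> (\<Sum>k\<in>UNIV. c t k)"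
        proof (rule sum_mono)
          fix k
          have "0 \<le> u z a (br (uf k) z (\<pi> z))" "u z a (br (uf k) z (\<pi> z)) \<le> 1" using u_range zZ by auto
          then show "\<bar>c t k * u z a (br (uf k) z (\<pi> z))\<bar> \<le> c t k"
            using c0 by (simp add: abs_mult mult_left_le)
        qed
        also have "\<dots> \<le> 1" using c1 by simp
        finally show "\<bar>\<Sum>k\<in>UNIV. c t k * u z a (br (uf k) z (\<pi> z))\<bar> \<le> 1" .
      qed
      finally show "\<bar>w z a\<bar> \<le> real (card (S z))" by simp
    qed
    then show ?thesis using core[OF _ _ _ d0, of uf z "E z" "\<pi> z" "w z" "real (card (S z))"]
      E_approx pimix zZ unfolding P_def by blast
  qed
  define \<pi>E where "\<pi>E z = (SOME x'. P z x')" for z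
  have PE: "P z (\<pi>E z)" if "z \<in> Z" for z unfolding \<pi>E_def using exP[OF that] by (rule someI_ex)
  define D where "D t = (\<Sum>k\<in>UNIV. c t k * eu u (zs t) (\<pi> (zs t)) (br (uf k) (zs t) (\<pi> (zs t))))
               - (\<Sum>k\<in>UNIV. c t k * eu u (zs t) (\<pi>E (zs t)) (br (uf k) (zs t) (\<pi>E (zs t))))" for t
  have grp: "(\<Sum>t=1..T. D t) = (\<Sum>z\<in>zs ` {1..T}. \<Sum>t\<in>S z. D t)"
    unfolding S_def by (rule sum.group[symmetric]) auto
  have per: "(\<Sum>t\<in>S z. D t) \<le> real (card (S z)) * \<delta>" if zin: "z \<in> zs ` {1..T}" for z
  proof -
    have zZ: "z \<in> Z" using zin zsZ by auto
    have Pz: "P z (\<pi>E z)" by (rule PE[OF zZ])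
    have "(\<Sum>t\<in>S z. D t) = (\<Sum>t\<in>S z. \<Sum>k\<in>UNIV. c t k * eu u z (\<pi> z) (br (uf k) z (\<pi> z)))
        - (\<Sum>t\<in>S z. \<Sum>k\<in>UNIV. c t k * eu u z (\<pi>E z) (br (uf k) z (\<pi> z)))"
      unfolding sum_subtractf[symmetric] D_def
      using Pz unfolding P_def by (intro sum.cong) (auto simp: S_def)
    also have "\<dots> = (\<Sum>a\<in>UNIV. \<pi> z $ a * w z a) - (\<Sum>a\<in>UNIV. \<pi>E z $ a * w z a)"
      unfolding w_def lin_ident ..
    also have "\<dots> \<le> real (card (S z)) * \<delta>" using Pz unfolding P_def by blast
    finally show ?thesis .
  qed
  have "(\<Sum>t=1..T. D t) \<le> (\<Sum>z\<in>zs ` {1..T}. real (card (S z)) * \<delta>)"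
    unfolding grp by (rule sum_mono) (rule per)
  also have "\<dots> = (\<Sum>z\<in>zs ` {1..T}. real (card (S z))) * \<delta>" by (simp add: sum_distrib_right)
  also have "(\<Sum>z\<in>zs ` {1..T}. real (card (S z))) = (\<Sum>z\<in>zs ` {1..T}. \<Sum>t\<in>S z. 1)" by simp
  also have "\<dots> = (\<Sum>t=1..T. (1::real))" unfolding S_def by (rule sum.group) auto
  also have "\<dots> = real T" by simp
  finally have "(\<Sum>t=1..T. D t) \<le> 1" using dT by linarith
  then show ?thesis using PE unfolding D_def P_def by blast
qed

lemma delta_sum: "(\<Sum>k\<in>(UNIV::'k::finite set). (if k = j then 1 else 0) * g k) = (g j :: real)"
proof -
  have "(\<Sum>k\<in>(UNIV::'k set). (if k = j then 1 else 0) * g k) = (\<Sum>k\<in>UNIV. if k = j then g k else 0)"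
    by (rule sum.cong) auto
  then show ?thesis by simp
qed

theorem mainTheorem2:
  fixes Z :: "(real ^ 'd) set"
    and u :: "real ^ 'd \<Rightarrow> 'a::finite \<Rightarrow> 'f::{finite,linorder} \<Rightarrow> real"
    and uf :: "'k::finite \<Rightarrow> real ^ 'd \<Rightarrow> 'a \<Rightarrow> 'f \<Rightarrow> real"
    and T :: nat and \<delta> :: real
    and E :: "real ^ 'd \<Rightarrow> (real ^ 'a) set"
  assumes u_range: "\<forall>z\<in>Z. \<forall>a af. 0 \<le> u z a af \<and> u z a af \<le> 1"
    and uf_range: "\<forall>k. \<forall>z\<in>Z. \<forall>a af. 0 \<le> uf k z a af \<and> uf k z a af \<le> 1"
    and delta_pos: "\<delta> > 0"
    and delta_le: "\<delta> \<le> 1 / real T"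
    and E_approx: "\<forall>z\<in>Z. approx_extreme_points uf z \<delta> (E z)"
  shows "(\<forall>(zs :: nat \<Rightarrow> real ^ 'd) (fs :: nat \<Rightarrow> 'k) (\<pi> :: real ^ 'd \<Rightarrow> real ^ 'a).
            (\<forall>t\<in>{1..T}. zs t \<in> Z) \<and> (\<forall>z\<in>Z. \<pi> z \<in> mixed) \<longrightarrow>
            (\<exists>\<pi>E :: real ^ 'd \<Rightarrow> real ^ 'a. (\<forall>z\<in>Z. \<pi>E z \<in> E z) \<and>
               (\<Sum>t=1..T. eu u (zs t) (\<pi> (zs t)) (br (uf (fs t)) (zs t) (\<pi> (zs t)))
                        - eu u (zs t) (\<pi>E (zs t)) (br (uf (fs t)) (zs t) (\<pi>E (zs t)))) \<le> 1))
       \<and>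
       (\<forall>(F :: 'k pmf) (zs :: nat \<Rightarrow> real ^ 'd) (\<pi> :: real ^ 'd \<Rightarrow> real ^ 'a).
            (\<forall>t\<in>{1..T}. zs t \<in> Z) \<and> (\<forall>z\<in>Z. \<pi> z \<in> mixed) \<longrightarrow>
            (\<exists>\<pi>E :: real ^ 'd \<Rightarrow> real ^ 'a. (\<forall>z\<in>Z. \<pi>E z \<in> E z) \<and>
               (\<Sum>t=1..T. measure_pmf.expectation F (\<lambda>f.
                   eu u (zs t) (\<pi> (zs t)) (br (uf f) (zs t) (\<pi> (zs t)))
                 - eu u (zs t) (\<pi>E (zs t)) (br (uf f) (zs t) (\<pi>E (zs t))))) \<le> 1))"
proof -
  have dT: "real T * \<delta> \<le> 1"
  proof (cases "T = 0")
    case False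
    then show ?thesis using delta_le by (simp add: field_simps)
  qed simp
  have d0: "\<delta> \<ge> 0" using delta_pos by simp
  show ?thesis
  proof (intro conjI allI impI; elim conjE)
    fix zs :: "nat \<Rightarrow> real ^ 'd" and fs :: "nat \<Rightarrow> 'k" and \<pi> :: "real ^ 'd \<Rightarrow> real ^ 'a"
    assume zsZ: "\<forall>t\<in>{1..T}. zs t \<in> Z" and pim: "\<forall>z\<in>Z. \<pi> z \<in> mixed"
    obtain \<pi>E where p1: "\<forall>z\<in>Z. \<pi>E z \<in> E z" and p2:
     "(\<Sum>t=1..T. (\<Sum>k\<in>UNIV. (if k = fs t then 1 else 0) * eu u (zs t) (\<pi> (zs t)) (br (uf k) (zs t) (\<pi> (zs t))))
               - (\<Sum>k\<in>UNIV. (if k = fs t then 1 else 0) * eu u (zs t) (\<pi>E (zs t)) (br (uf k) (zs t) (\<pi>E (zs t))))) \<le> 1"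
    proof -
      have c0: "\<forall>t k. 0 \<le> (\<lambda>t k. if k = fs t then 1 else (0::real)) t k" by simp
      have c1: "\<forall>t. (\<Sum>k\<in>UNIV. (\<lambda>t k. if k = fs t then 1 else (0::real)) t k) \<le> 1" by simp
      show ?thesis using aggregate[OF u_range d0 dT E_approx zsZ pim c0 c1] that by auto
    qed
    show "\<exists>\<pi>E :: real ^ 'd \<Rightarrow> real ^ 'a. (\<forall>z\<in>Z. \<pi>E z \<in> E z) \<and>
               (\<Sum>t=1..T. eu u (zs t) (\<pi> (zs t)) (br (uf (fs t)) (zs t) (\<pi> (zs t)))
                        - eu u (zs t) (\<pi>E (zs t)) (br (uf (fs t)) (zs t) (\<pi>E (zs t)))) \<le> 1"
      using p1 p2 by (intro exI[of _ \<pi>E]) (simp only: delta_sum)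
  next
    fix F :: "'k pmf" and zs :: "nat \<Rightarrow> real ^ 'd" and \<pi> :: "real ^ 'd \<Rightarrow> real ^ 'a"
    assume zsZ: "\<forall>t\<in>{1..T}. zs t \<in> Z" and pim: "\<forall>z\<in>Z. \<pi> z \<in> mixed"
    have c1: "\<forall>t. (\<Sum>k\<in>UNIV. (\<lambda>t k. pmf F k) t k) \<le> 1" using sum_pmf_eq_1[of UNIV F] by simp
    obtain \<pi>E where p1: "\<forall>z\<in>Z. \<pi>E z \<in> E z" and p2:
     "(\<Sum>t=1..T. (\<Sum>k\<in>UNIV. pmf F k * eu u (zs t) (\<pi> (zs t)) (br (uf k) (zs t) (\<pi> (zs t))))
               - (\<Sum>k\<in>UNIV. pmf F k * eu u (zs t) (\<pi>E (zs t)) (br (uf k) (zs t) (\<pi>E (zs t))))) \<le> 1"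
    proof -
      have c0: "\<forall>t k. 0 \<le> (\<lambda>t k. pmf F k) t k" by simp
      show ?thesis using aggregate[OF u_range d0 dT E_approx zsZ pim c0 c1] that by auto
    qed
    have ex: "measure_pmf.expectation F g = (\<Sum>k\<in>UNIV. pmf F k * g k)" for g :: "'k \<Rightarrow> real"
      by (subst integral_measure_pmf[of UNIV]) auto
    show "\<exists>\<pi>E :: real ^ 'd \<Rightarrow> real ^ 'a. (\<forall>z\<in>Z. \<pi>E z \<in> E z) \<and>
               (\<Sum>t=1..T. measure_pmf.expectation F (\<lambda>f.
                   eu u (zs t) (\<pi> (zs t)) (br (uf f) (zs t) (\<pi> (zs t)))
                 - eu u (zs t) (\<pi>E (zs t)) (br (uf f) (zs t) (\<pi>E (zs t))))) \<le> 1"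
      using p1 p2 by (intro exI[of _ \<pi>E]) (simp add: ex right_diff_distrib sum_subtractf)
  qed
qed

end
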